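(* Let $(X_r)_{r\ge 0}$ be a discrete time Markov chain on a finite state space $S$ with transition probability matrix $\mathbf{P}$, let $M\subset S$ with $M\neq\emptyset$ and $\overline{M}=S\setminus M\neq\emptyset$, and assume that $\mathbf{I}-\mathbf{P}_M$ and $\mathbf{I}-\mathbf{P}_{\overline{M}}$ are invertible. Then for every integer $m\ge 0$: (a) $\displaystyle M_m(\mathcal{N}_1)=\sum_{j=0}^{m} b_{m,j,1}\,\mathbf{P}_M^{j}\,(\mathbf{I}-\mathbf{P}_M)^{-j-1}\,\mathbf{P}_{M\overline{M}}$; (b) $\displaystyle M_m(\mathcal{R}_1)=\mathbf{P}_M+\mathbf{P}_{M\overline{M}}\sum_{j=0}^{m} b_{m,j,2}\,\mathbf{P}_{\overline{M}}^{j}\,(\mathbf{I}-\mathbf{P}_{\overline{M}})^{-j-1}\,\mathbf{P}_{\overline{M}M}$.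
   Context: Moment generating Stirling numbers: for integers $i\ge0$, $j\ge0$ and real $k$, $b_{i,j,k}=\sum_{r=0}^{j}\binom{j}{r}(-1)^{j-r}(r+k)^i$, with the convention $0^0=1$. Block notation: $\mathbf{P}_M=(p_{ij})_{i,j\in M}$, $\mathbf{P}_{M\overline{M}}=(p_{ij})_{i\in M,j\in\overline{M}}$, $\mathbf{P}_{\overline{M}M}=(p_{ij})_{i\in\overline{M},j\in M}$, $\mathbf{P}_{\overline{M}}=(p_{ij})_{i,j\in\overline{M}}$. Passage and recurrence times (matrix valued): for $i\in M$, let $\tau^{N}=\min\{r\ge1: \#\{1\le t\le r: X_t\in\overline{M}\}=1\}$ and $\tau^{R}=\min\{r\ge1:\#\{1\le t\le r: X_t\in M\}=1\}$. For $n\ge0$, $P(\mathcal{N}_1=n)$ is the $|M|\times|\overline{M}|$ matrix with $(i,j)$ entry $P(\tau^N=n,\,X_n=j\mid X_0=i)$ ($i\in M$, $j\in\overline{M}$), and $P(\mathcal{R}_1=n)$ is the $|M|\times|M|$ matrix with $(i,j)$ entry $P(\tau^R=n,\,X_n=j\mid X_0=i)$ ($i,j\in M$). Moments: for a matrix random variable $\mathcal{Y}$ of this kind, $M_m(\mathcal{Y})=\sum_{n=0}^{\infty} n^m P(\mathcal{Y}=n)$ (entrywise), with $0^0=1$. *)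

theory Defs
  imports Complex_Main
begin

text \<open>Moment generating Stirling numbers b_{i,j,k} (with 0^0 = 1, as for real powers).\<close>
definition mgs :: "nat \<Rightarrow> nat \<Rightarrow> real \<Rightarrow> real" where
  "mgs i j k = (\<Sum>r = 0..j. real (j choose r) * (-1) ^ (j - r) * (real r + k) ^ i)"

text \<open>Matrices indexed by the state space 's are functions 's => 's => real.
  Block matrices P_K are handled by contracting products over the index set K.\<close>
definition blk_mult :: "'s set \<Rightarrow> ('s \<Rightarrow> 's \<Rightarrow> real) \<Rightarrow> ('s \<Rightarrow> 's \<Rightarrow> real) \<Rightarrow> ('s \<Rightarrow> 's \<Rightarrow> real)" where
  "blk_mult K A B = (\<lambda>i j. \<Sum>k\<in>K. A i k * B k j)"

definition idm :: "'s \<Rightarrow> 's \<Rightarrow> real" where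
  "idm = (\<lambda>i j. if i = j then 1 else 0)"

fun blk_pow :: "'s set \<Rightarrow> ('s \<Rightarrow> 's \<Rightarrow> real) \<Rightarrow> nat \<Rightarrow> ('s \<Rightarrow> 's \<Rightarrow> real)" where
  "blk_pow K A 0 = idm"
| "blk_pow K A (Suc n) = blk_mult K A (blk_pow K A n)"

definition blk_is_inv :: "'s set \<Rightarrow> ('s \<Rightarrow> 's \<Rightarrow> real) \<Rightarrow> ('s \<Rightarrow> 's \<Rightarrow> real) \<Rightarrow> bool" where
  "blk_is_inv K A B \<longleftrightarrow> (\<forall>i\<in>K. \<forall>j\<in>K. blk_mult K A B i j = idm i j \<and> blk_mult K B A i j = idm i j)"

definition blk_invertible :: "'s set \<Rightarrow> ('s \<Rightarrow> 's \<Rightarrow> real) \<Rightarrow> bool" where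
  "blk_invertible K A \<longleftrightarrow> (\<exists>B. blk_is_inv K A B)"

definition blk_inv :: "'s set \<Rightarrow> ('s \<Rightarrow> 's \<Rightarrow> real) \<Rightarrow> ('s \<Rightarrow> 's \<Rightarrow> real)" where
  "blk_inv K A = (SOME B. blk_is_inv K A B)"

definition I_minus :: "('s \<Rightarrow> 's \<Rightarrow> real) \<Rightarrow> ('s \<Rightarrow> 's \<Rightarrow> real)" where
  "I_minus P = (\<lambda>i j. idm i j - P i j)"

definition stochastic :: "('s::finite \<Rightarrow> 's \<Rightarrow> real) \<Rightarrow> bool" where
  "stochastic P \<longleftrightarrow> (\<forall>i j. 0 \<le> P i j) \<and> (\<forall>i. (\<Sum>j\<in>UNIV. P i j) = 1)"

text \<open>A path X_1..X_n given X_0 = i is the list xs (length n); X_t = (i # xs) ! t.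
  Its probability under the Markov chain with transition matrix P.\<close>
definition path_prob :: "('s \<Rightarrow> 's \<Rightarrow> real) \<Rightarrow> 's \<Rightarrow> 's list \<Rightarrow> real" where
  "path_prob P i xs = (\<Prod>t<length xs. P ((i # xs) ! t) ((i # xs) ! Suc t))"

definition visits :: "'s set \<Rightarrow> 's \<Rightarrow> 's list \<Rightarrow> nat \<Rightarrow> nat" where
  "visits A i xs r = card {t \<in> {1..r}. (i # xs) ! t \<in> A}"

text \<open>The event tau = n, where tau = min{r >= 1 : #{1<=t<=r : X_t in A} = 1},
  evaluated on the path X_0..X_n (it only depends on this prefix).\<close>
definition tau_eq :: "'s set \<Rightarrow> 's \<Rightarrow> 's list \<Rightarrow> nat \<Rightarrow> bool" where
  "tau_eq A i xs n \<longleftrightarrow> 1 \<le> n \<and> visits A i xs n = 1 \<and> (\<forall>r. 1 \<le> r \<and> r < n \<longrightarrow> visits A i xs r \<noteq> 1)"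

text \<open>P(tau = n, X_n = j | X_0 = i) for tau the first-count time of A.
  tau^N corresponds to A = complement of M, tau^R to A = M.\<close>
definition first_prob :: "('s::finite \<Rightarrow> 's \<Rightarrow> real) \<Rightarrow> 's set \<Rightarrow> 's \<Rightarrow> 's \<Rightarrow> nat \<Rightarrow> real" where
  "first_prob P A i j n = (\<Sum>xs\<in>{xs. length xs = n}.
      (if tau_eq A i xs n \<and> (i # xs) ! n = j then path_prob P i xs else 0))"

end

theory Submission
  imports Defs
begin


lemma bm_assoc: "blk_mult K (blk_mult K X Y) Z = blk_mult K X (blk_mult K Y Z)"
  unfolding blk_mult_def
  by (rule ext)+ (simp add: sum_distrib_left sum_distrib_right mult.assoc, rule sum.swap)

lemma bm_cong: "(\<And>k. k \<in> K \<Longrightarrow> X i k = X' i k) \<Longrightarrow> (\<And>k. k \<in> K \<Longrightarrow> Y k j = Y' k j)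
   \<Longrightarrow> blk_mult K X Y i j = blk_mult K X' Y' i j"
  unfolding blk_mult_def by (auto intro!: sum.cong)

lemma sum_idm_left: "finite K \<Longrightarrow> i \<in> K \<Longrightarrow> (\<Sum>k\<in>K. idm i k * f k) = f i"
proof -
  assume "finite K" "i \<in> K"
  have "(\<Sum>k\<in>K. idm i k * f k) = (\<Sum>k\<in>K. if i = k then f k else 0)"
    by (rule sum.cong) (auto simp: idm_def)
  then show ?thesis using \<open>finite K\<close> \<open>i \<in> K\<close> by simp
qed

lemma sum_idm_right: "finite K \<Longrightarrow> j \<in> K \<Longrightarrow> (\<Sum>k\<in>K. f k * idm k j) = f j"
proof -
  assume "finite K" "j \<in> K"
  have "(\<Sum>k\<in>K. f k * idm k j) = (\<Sum>k\<in>K. if k = j then f k else 0)"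
    by (rule sum.cong) (auto simp: idm_def)
  then show ?thesis using \<open>finite K\<close> \<open>j \<in> K\<close> by simp
qed

lemma bm_idl: "finite K \<Longrightarrow> i \<in> K \<Longrightarrow> blk_mult K idm Y i j = Y i j"
  unfolding blk_mult_def by (rule sum_idm_left)

lemma bm_idr: "finite K \<Longrightarrow> j \<in> K \<Longrightarrow> blk_mult K X idm i j = X i j"
  unfolding blk_mult_def by (rule sum_idm_right)

lemma pow_add: "finite K \<Longrightarrow> i \<in> K \<Longrightarrow>
   blk_pow K X (a+b) i j = blk_mult K (blk_pow K X a) (blk_pow K X b) i j"
proof (induction a arbitrary: i)
  case 0 then show ?case by (simp add: bm_idl)
next
  case (Suc a)
  have "blk_pow K X (Suc a + b) i j = blk_mult K X (blk_pow K X (a+b)) i j" by simp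
  also have "\<dots> = blk_mult K X (blk_mult K (blk_pow K X a) (blk_pow K X b)) i j"
    by (rule bm_cong) (use Suc in auto)
  also have "\<dots> = blk_mult K (blk_pow K X (Suc a)) (blk_pow K X b) i j"
    by (simp add: bm_assoc)
  finally show ?case .
qed

lemma bm_Iminus: "finite K \<Longrightarrow> j \<in> K \<Longrightarrow> blk_mult K X (I_minus A) i j = X i j - blk_mult K X A i j"
  unfolding I_minus_def blk_mult_def
  by (simp add: right_diff_distrib sum_subtractf sum_idm_right)

lemma Iminus_bm: "finite K \<Longrightarrow> i \<in> K \<Longrightarrow> blk_mult K (I_minus A) X i j = X i j - blk_mult K A X i j"
  unfolding I_minus_def blk_mult_def
  by (simp add: left_diff_distrib sum_subtractf sum_idm_left)

lemma inv_unique_vec: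
  assumes fin: "finite K" and inv: "blk_is_inv K (I_minus A) R"
    and eq: "\<And>i. i \<in> K \<Longrightarrow> (\<Sum>k\<in>K. I_minus A i k * x k) = y i" and i: "i \<in> K"
  shows "x i = (\<Sum>k\<in>K. R i k * y k)"
proof -
  have "(\<Sum>k\<in>K. R i k * y k) = (\<Sum>k\<in>K. R i k * (\<Sum>l\<in>K. I_minus A k l * x l))"
    using eq by simp
  also have "\<dots> = (\<Sum>l\<in>K. blk_mult K R (I_minus A) i l * x l)"
    unfolding blk_mult_def by (simp add: sum_distrib_left sum_distrib_right mult.assoc, rule sum.swap)
  also have "\<dots> = (\<Sum>l\<in>K. idm i l * x l)"
    using inv i unfolding blk_is_inv_def by (intro sum.cong) auto
  also have "\<dots> = x i" using fin i by (rule sum_idm_left)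
  finally show ?thesis by simp
qed

lemma inv_comm:
  assumes fin: "finite K" and inv: "blk_is_inv K (I_minus A) R" and i: "i \<in> K" and j: "j \<in> K"
  shows "blk_mult K R A i j = blk_mult K A R i j"
proof -
  have 1: "blk_mult K R (I_minus A) i j = idm i j" and 2: "blk_mult K (I_minus A) R i j = idm i j"
    using inv i j unfolding blk_is_inv_def by auto
  show ?thesis using 1 2 bm_Iminus[OF fin j, of R A i] Iminus_bm[OF fin i, of A R j] by simp
qed

lemma inv_comm_pow:
  assumes fin: "finite K" and inv: "blk_is_inv K (I_minus A) R" and i: "i \<in> K" and j: "j \<in> K"
  shows "blk_mult K R (blk_pow K A n) i j = blk_mult K (blk_pow K A n) R i j"
  using i j
proof (induction n arbitrary: i j)
  case 0 then show ?case using fin by (simp add: bm_idl bm_idr)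
next
  case (Suc n)
  have "blk_mult K R (blk_pow K A (Suc n)) i j = blk_mult K (blk_mult K R A) (blk_pow K A n) i j"
    by (simp add: bm_assoc)
  also have "\<dots> = blk_mult K (blk_mult K A R) (blk_pow K A n) i j"
    by (rule bm_cong) (use inv_comm[OF fin inv] Suc.prems in auto)
  also have "\<dots> = blk_mult K A (blk_mult K R (blk_pow K A n)) i j" by (simp add: bm_assoc)
  also have "\<dots> = blk_mult K A (blk_mult K (blk_pow K A n) R) i j"
    by (rule bm_cong) (use Suc in auto)
  also have "\<dots> = blk_mult K (blk_pow K A (Suc n)) R i j" by (simp add: bm_assoc)
  finally show ?case .
qed

definition HH :: "'s set \<Rightarrow> ('s \<Rightarrow> 's \<Rightarrow> real) \<Rightarrow> ('s \<Rightarrow> 's \<Rightarrow> real) \<Rightarrow> nat \<Rightarrow> 's \<Rightarrow> 's \<Rightarrow> real" where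
  "HH K A R j = blk_mult K (blk_pow K A j) (blk_pow K R (Suc j))"

lemma HH_0: "finite K \<Longrightarrow> i \<in> K \<Longrightarrow> j \<in> K \<Longrightarrow> HH K A R 0 i j = R i j"
  unfolding HH_def by (simp add: bm_idl bm_idr)

lemma HH_Suc:
  assumes fin: "finite K" and inv: "blk_is_inv K (I_minus A) R" and i: "i \<in> K" and j: "j \<in> K"
  shows "blk_mult K R (blk_mult K A (HH K A R n)) i j = HH K A R (Suc n) i j"
proof -
  have "blk_mult K R (blk_mult K A (HH K A R n)) i j
     = blk_mult K (blk_mult K R (blk_pow K A (Suc n))) (blk_pow K R (Suc n)) i j"
    unfolding HH_def by (simp add: bm_assoc)
  also have "\<dots> = blk_mult K (blk_mult K (blk_pow K A (Suc n)) R) (blk_pow K R (Suc n)) i j"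
    by (rule bm_cong, rule inv_comm_pow[OF fin inv i], simp_all)
  also have "\<dots> = HH K A R (Suc n) i j" unfolding HH_def by (simp add: bm_assoc)
  finally show ?thesis .
qed



lemma pascal_sum:
  fixes a :: "nat \<Rightarrow> real"
  shows "(\<Sum>r\<le>Suc j. real (Suc j choose r) * a r)
       = (\<Sum>r\<le>j. real (j choose r) * a r) + (\<Sum>r\<le>j. real (j choose r) * a (Suc r))"
proof -
  have "(\<Sum>r\<le>Suc j. real (Suc j choose r) * a r)
     = a 0 + (\<Sum>r\<le>j. real (j choose r) * a (Suc r)) + (\<Sum>r\<le>j. real (j choose Suc r) * a (Suc r))"
    by (subst sum.atMost_Suc_shift) (simp add: distrib_right sum.distrib)
  moreover have "(\<Sum>r\<le>Suc j. real (j choose r) * a r) = a 0 + (\<Sum>r\<le>j. real (j choose Suc r) * a (Suc r))"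
    by (subst sum.atMost_Suc_shift) simp
  moreover have "(\<Sum>r\<le>Suc j. real (j choose r) * a r) = (\<Sum>r\<le>j. real (j choose r) * a r)"
    by simp
  ultimately show ?thesis by simp
qed

fun Dd :: "nat \<Rightarrow> (real \<Rightarrow> real) \<Rightarrow> real \<Rightarrow> real" where
  "Dd 0 f x = f x"
| "Dd (Suc j) f x = Dd j f (x + 1) - Dd j f x"

lemma newton: "f (x + real n) = (\<Sum>j\<le>n. real (n choose j) * Dd j f x)"
proof (induction n arbitrary: x)
  case 0 then show ?case by simp
next
  case (Suc n)
  have "f (x + real (Suc n)) = f ((x + 1) + real n)" by (simp add: algebra_simps)
  also have "\<dots> = (\<Sum>j\<le>n. real (n choose j) * Dd j f (x+1))" by (rule Suc.IH)
  also have "\<dots> = (\<Sum>j\<le>n. real (n choose j) * Dd j f x) + (\<Sum>j\<le>n. real (n choose j) * Dd (Suc j) f x)"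
    by (simp add: right_diff_distrib sum_subtractf)
  also have "\<dots> = (\<Sum>j\<le>Suc n. real (Suc n choose j) * Dd j f x)"
    by (rule pascal_sum[symmetric])
  finally show ?case .
qed

lemma Dd_lin: "finite S \<Longrightarrow> Dd j (\<lambda>y. \<Sum>k\<in>S. a k * g k y) x = (\<Sum>k\<in>S. a k * Dd j (g k) x)"
  by (induction j arbitrary: x) (simp_all add: sum_subtractf right_diff_distrib)

lemma Dd_Suc': "Dd (Suc j) f x = Dd j (\<lambda>y. f (y + 1) - f y) x"
proof (induction j arbitrary: x)
  case 0 then show ?case by simp
next
  case (Suc j)
  have "Dd (Suc (Suc j)) f x = Dd (Suc j) f (x+1) - Dd (Suc j) f x" by (rule Dd.simps(2))
  also have "\<dots> = Dd j (\<lambda>y. f (y + 1) - f y) (x+1) - Dd j (\<lambda>y. f (y + 1) - f y) x"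
    by (simp only: Suc.IH)
  also have "\<dots> = Dd (Suc j) (\<lambda>y. f (y + 1) - f y) x" by (rule Dd.simps(2)[symmetric])
  finally show ?case .
qed

lemma Dd_vanish: "i < j \<Longrightarrow> Dd j (\<lambda>y. (y + c) ^ i) x = 0"
proof (induction i arbitrary: j x rule: less_induct)
  case (less i)
  obtain j' where j: "j = Suc j'" using less.prems by (cases j) auto
  have eq: "(\<lambda>y. (y + 1 + c) ^ i - (y + c) ^ i) = (\<lambda>y. \<Sum>k\<in>{..<i}. real (i choose k) * (y + c) ^ k)"
  proof
    fix y :: real
    have "(y + c + 1) ^ i = (\<Sum>k\<le>i. real (i choose k) * (y + c) ^ k)"
      using binomial_ring[of "y + c" 1 i] by (simp add: mult.commute)
    also have "\<dots> = (\<Sum>k<i. real (i choose k) * (y + c) ^ k) + (y + c) ^ i"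
      by (simp add: lessThan_Suc_atMost[symmetric])
    finally show "(y + 1 + c) ^ i - (y + c) ^ i = (\<Sum>k\<in>{..<i}. real (i choose k) * (y + c) ^ k)"
      by (simp add: algebra_simps)
  qed
  have "Dd j (\<lambda>y. (y + c) ^ i) x = Dd j' (\<lambda>y. (y + 1 + c) ^ i - (y + c) ^ i) x"
    unfolding j Dd_Suc' by (simp add: add.assoc add.commute add.left_commute)
  also have "\<dots> = (\<Sum>k\<in>{..<i}. real (i choose k) * Dd j' (\<lambda>y. (y + c) ^ k) x)"
    unfolding eq by (rule Dd_lin) simp
  also have "\<dots> = 0"
    using less.prems j by (intro sum.neutral ballI) (simp add: less.IH)
  finally show ?case .
qed

lemma neg1_pow_diff: "r \<le> j \<Longrightarrow> (-1::real) ^ (j - r) = (-1) ^ j * (-1) ^ r"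
proof -
  assume "r \<le> j"
  then have "(-1::real) ^ j = (-1) ^ (j - r) * (-1) ^ r" by (simp flip: power_add)
  then have "(-1::real) ^ j * (-1) ^ r = (-1) ^ (j - r) * ((-1) ^ r * (-1) ^ r)" by simp
  also have "(-1::real) ^ r * (-1) ^ r = 1" by (simp flip: power_add)
  finally show ?thesis by simp
qed

lemma Dd_closed: "Dd j f x = (-1) ^ j * (\<Sum>r\<le>j. real (j choose r) * ((-1) ^ r * f (x + real r)))"
proof (induction j arbitrary: x)
  case 0 then show ?case by simp
next
  case (Suc j)
  let ?a = "\<lambda>r. (-1::real) ^ r * f (x + real r)"
  define V where "V = (\<Sum>r\<le>j. real (j choose r) * ((-1) ^ r * f (x + real r)))"
  define U where "U = (\<Sum>r\<le>j. real (j choose r) * ((-1) ^ r * f (x + 1 + real r)))"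
  have s2: "(\<Sum>r\<le>j. real (j choose r) * ?a (Suc r)) = - U"
    unfolding U_def sum_negf[symmetric] by (rule sum.cong) (simp_all add: algebra_simps)
  have T: "(\<Sum>r\<le>Suc j. real (Suc j choose r) * ?a r) = V - U"
    using pascal_sum[of j ?a] s2 unfolding V_def by simp
  have D: "Dd (Suc j) f x = (-1) ^ j * U - (-1) ^ j * V"
    unfolding U_def V_def using Suc.IH[of x] Suc.IH[of "x+1"] by simp
  show ?case unfolding D T by (simp add: algebra_simps)
qed

lemma mgs_Dd: "mgs m j c = Dd j (\<lambda>y. (y + c) ^ m) 0"
  unfolding mgs_def Dd_closed atLeast0AtMost
  by (simp add: sum_distrib_left, rule sum.cong, simp_all add: neg1_pow_diff)

lemma newton_mgs: "(real n + c) ^ m = (\<Sum>k = 0..m. mgs m k c * real (n choose k))"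
proof -
  let ?f = "\<lambda>y. (y + c) ^ m"
  have "(real n + c) ^ m = (\<Sum>j\<le>n. real (n choose j) * Dd j ?f 0)"
    using newton[of ?f 0 n] by simp
  also have "\<dots> = (\<Sum>j\<le>max n m. real (n choose j) * Dd j ?f 0)"
    by (rule sum.mono_neutral_left) auto
  also have "\<dots> = (\<Sum>j\<le>m. real (n choose j) * Dd j ?f 0)"
    by (rule sum.mono_neutral_right) (auto simp: Dd_vanish)
  finally show ?thesis by (simp add: mgs_Dd atLeast0AtMost mult.commute)
qed



lemma pow_nonneg: "(\<And>i j. 0 \<le> P i j) \<Longrightarrow> 0 \<le> blk_pow K P n i j"
  by (induction n arbitrary: i j) (auto simp: idm_def blk_mult_def intro!: sum_nonneg)

lemma summable_poly_geom: "0 \<le> (\<theta>::real) \<Longrightarrow> \<theta> < 1 \<Longrightarrow> summable (\<lambda>n. real n ^ j * \<theta> ^ n)"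
proof (induction j arbitrary: \<theta>)
  case 0 then show ?case by (simp add: summable_geometric)
next
  case (Suc j)
  define x where "x = (1 + \<theta>) / 2"
  have x: "\<theta> < x" "x < 1" "0 < x" using Suc.prems by (auto simp: x_def)
  have sx: "summable (\<lambda>n. real n ^ j * x ^ n)" using Suc.IH[of x] x by simp
  have "norm (\<theta> / x) < 1" using x Suc.prems by (simp add: abs_if field_simps)
  then have to0: "(\<lambda>n. of_nat n * (\<theta> / x) ^ n) \<longlonglongrightarrow> (0::real)"
    by (rule powser_times_n_limit_0)
  obtain N where N: "\<And>n. n \<ge> N \<Longrightarrow> norm (of_nat n * (\<theta> / x) ^ n - 0) < (1::real)"
    using LIMSEQ_D[OF to0, of 1] by auto
  show ?case
  proof (rule summable_comparison_test'[OF sx])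
    fix n assume "n \<ge> N"
    then have "real n * (\<theta> / x) ^ n < 1" using N[of n] Suc.prems x by simp
    then have "real n * \<theta> ^ n < x ^ n" using x by (simp add: power_divide field_simps)
    then have "real n ^ j * (real n * \<theta> ^ n) \<le> real n ^ j * x ^ n"
      by (intro mult_left_mono) auto
    then show "norm (real n ^ Suc j * \<theta> ^ n) \<le> real n ^ j * x ^ n"
      using Suc.prems by (simp add: abs_mult mult_ac)
  qed
qed

lemma decay:
  fixes P :: "'s::finite \<Rightarrow> 's \<Rightarrow> real"
  assumes st: "stochastic P" and inv: "blk_is_inv K (I_minus P) R"
  shows "\<exists>\<theta>. 0 \<le> \<theta> \<and> \<theta> < 1 \<and> (\<forall>n. \<forall>i\<in>K. \<forall>l\<in>K. blk_pow K P n i l \<le> 2 * \<theta> ^ n)"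
proof -
  have Pnn: "\<And>i j. 0 \<le> P i j" and Prow: "\<And>i. (\<Sum>j\<in>UNIV. P i j) = 1"
    using st unfolding stochastic_def by auto
  have fin: "finite K" by simp
  define h where "h n i = (\<Sum>l\<in>K. blk_pow K P n i l)" for n i
  have hnn: "0 \<le> h n i" for n i unfolding h_def by (intro sum_nonneg pow_nonneg Pnn)
  have hSuc: "h (Suc n) i = (\<Sum>k\<in>K. P i k * h n k)" for n i
    unfolding h_def by (simp add: blk_mult_def sum_distrib_left, rule sum.swap)
  have h0: "i \<in> K \<Longrightarrow> h 0 i = 1" for i
    unfolding h_def using sum_idm_left[OF fin, of i "\<lambda>_. 1"] by simp
  have hdec: "i \<in> K \<Longrightarrow> h (Suc n) i \<le> h n i" for n i
  proof (induction n arbitrary: i)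
    case 0
    have "h (Suc 0) i = (\<Sum>k\<in>K. P i k)" unfolding hSuc using h0 by simp
    also have "\<dots> \<le> (\<Sum>k\<in>UNIV. P i k)" by (rule sum_mono2) (auto simp: Pnn)
    finally show ?case using Prow[of i] h0[OF 0] by simp
  next
    case (Suc n)
    have "h (Suc (Suc n)) i = (\<Sum>k\<in>K. P i k * h (Suc n) k)" by (rule hSuc)
    also have "\<dots> \<le> (\<Sum>k\<in>K. P i k * h n k)"
      by (intro sum_mono mult_left_mono Suc.IH Pnn)
    also have "\<dots> = h (Suc n) i" by (rule hSuc[symmetric])
    finally show ?case .
  qed
  have decs: "i \<in> K \<Longrightarrow> decseq (\<lambda>n. h n i)" for i
    by (rule decseq_SucI) (rule hdec)
  define L where "L i = lim (\<lambda>n. h n i)" for i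
  have hL: "i \<in> K \<Longrightarrow> (\<lambda>n. h n i) \<longlonglongrightarrow> L i" for i
  proof -
    assume i: "i \<in> K"
    have b: "\<forall>n. 0 \<le> h n i" using hnn by simp
    obtain L' where "(\<lambda>n. h n i) \<longlonglongrightarrow> L'"
      using decseq_convergent[OF decs[OF i] b] by metis
    then show ?thesis unfolding L_def by (simp add: limI)
  qed
  have Lfix: "i \<in> K \<Longrightarrow> L i = (\<Sum>k\<in>K. P i k * L k)" for i
  proof -
    assume i: "i \<in> K"
    have "(\<lambda>n. h (Suc n) i) \<longlonglongrightarrow> L i" using hL[OF i] by (rule LIMSEQ_Suc)
    moreover have "(\<lambda>n. h (Suc n) i) \<longlonglongrightarrow> (\<Sum>k\<in>K. P i k * L k)"
      unfolding hSuc by (intro tendsto_sum tendsto_mult tendsto_const hL)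
    ultimately show ?thesis by (rule LIMSEQ_unique)
  qed
  have L0: "i \<in> K \<Longrightarrow> L i = 0" for i
  proof -
    assume i: "i \<in> K"
    have "L i = (\<Sum>k\<in>K. R i k * 0)"
    proof (rule inv_unique_vec[OF fin inv _ i])
      fix i assume i: "i \<in> K"
      have "(\<Sum>k\<in>K. I_minus P i k * L k) = (\<Sum>k\<in>K. idm i k * L k) - (\<Sum>k\<in>K. P i k * L k)"
        unfolding I_minus_def by (simp add: left_diff_distrib sum_subtractf)
      also have "\<dots> = 0" using sum_idm_left[OF fin i] Lfix[OF i] by simp
      finally show "(\<Sum>k\<in>K. I_minus P i k * L k) = 0" .
    qed
    then show ?thesis by simp
  qed
  have "\<forall>\<^sub>F n in sequentially. \<forall>i\<in>K. h n i < 1/2"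
    using fin
  proof (rule eventually_ball_finite, intro ballI)
    fix i assume i: "i \<in> K"
    show "\<forall>\<^sub>F n in sequentially. h n i < 1/2"
      using hL[OF i] L0[OF i] by (intro order_tendstoD(2)) auto
  qed
  then obtain N0 where N0: "\<And>n. n \<ge> N0 \<Longrightarrow> \<forall>i\<in>K. h n i < 1/2"
    unfolding eventually_sequentially by blast
  define N where "N = Suc N0"
  have hN: "\<And>i. i \<in> K \<Longrightarrow> h N i \<le> 1/2" using N0[of N] by (auto simp: N_def)
  have Npos: "0 < N" by (simp add: N_def)
  have hmult: "h (a + b) i \<le> h a i * \<beta>" if i: "i \<in> K" and b: "\<And>k. k \<in> K \<Longrightarrow> h b k \<le> \<beta>" for a b i \<beta>
  proof -
    have "h (a + b) i = (\<Sum>l\<in>K. blk_mult K (blk_pow K P a) (blk_pow K P b) i l)"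
      unfolding h_def using pow_add[OF fin i] by simp
    also have "\<dots> = (\<Sum>k\<in>K. blk_pow K P a i k * h b k)"
      unfolding blk_mult_def h_def by (simp add: sum_distrib_left, rule sum.swap)
    also have "\<dots> \<le> (\<Sum>k\<in>K. blk_pow K P a i k * \<beta>)"
      by (intro sum_mono mult_left_mono b pow_nonneg Pnn) auto
    also have "\<dots> = h a i * \<beta>" unfolding h_def by (simp add: sum_distrib_right)
    finally show ?thesis .
  qed
  have hq: "i \<in> K \<Longrightarrow> h (q * N) i \<le> (1/2) ^ q" for q i
  proof (induction q arbitrary: i)
    case 0 then show ?case using h0 by simp
  next
    case (Suc q)
    have "h (q * N + N) i \<le> h (q * N) i * (1/2)" by (rule hmult[OF Suc.prems hN])
    also have "\<dots> \<le> (1/2) ^ q * (1/2)" by (intro mult_right_mono Suc.IH Suc.prems) auto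
    finally show ?case by (simp add: add.commute)
  qed
  define \<theta> where "\<theta> = root N (1/2)"
  have th: "0 \<le> \<theta>" "\<theta> < 1" "\<theta> ^ N = 1/2" using Npos by (auto simp: \<theta>_def)
  have bound: "h n i \<le> 2 * \<theta> ^ n" if i: "i \<in> K" for n i
  proof -
    define q where "q = n div N"
    have "h n i \<le> h (q * N) i"
      using decs[OF i] by (rule decseqD) (simp add: q_def)
    also have "\<dots> \<le> (1/2) ^ q" by (rule hq[OF i])
    also have "\<dots> = 2 * (1/2) ^ Suc q" by simp
    also have "\<dots> = 2 * (\<theta> ^ N) ^ Suc q" by (simp only: th(3))
    also have "\<dots> = 2 * \<theta> ^ (N * Suc q)" by (simp only: power_mult)
    also have "\<dots> \<le> 2 * \<theta> ^ n"
    proof -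
      have e: "n = N * q + n mod N" unfolding q_def by simp
      have "n mod N < N" using Npos by simp
      then have "n \<le> N * Suc q" using e by simp
      then show ?thesis using th by (simp add: power_decreasing)
    qed
    finally show ?thesis .
  qed
  have "blk_pow K P n i l \<le> 2 * \<theta> ^ n" if "i \<in> K" "l \<in> K" for n i l
  proof -
    have "blk_pow K P n i l \<le> h n i"
      unfolding h_def using that by (intro member_le_sum pow_nonneg Pnn) auto
    then show ?thesis using bound[OF that(1), of n] by linarith
  qed
  then show ?thesis using th by blast
qed



lemma choose_le_pow: "real (n choose j) \<le> real n ^ j"
proof (cases "j \<le> n")
  case True
  then have "n choose j \<le> n ^ j" by (rule binomial_le_pow)
  then show ?thesis by (metis of_nat_le_iff of_nat_power)
next
  case False
  then have "n choose j = 0" by (simp add: binomial_eq_0)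
  moreover have "0 \<le> real n ^ j" by simp
  ultimately show ?thesis by (simp only: of_nat_0)
qed

lemma summ_choose:
  fixes P :: "'s::finite \<Rightarrow> 's \<Rightarrow> real"
  assumes st: "stochastic P" and inv: "blk_is_inv K (I_minus P) R" and i: "i \<in> K" and l: "l \<in> K"
  shows "summable (\<lambda>n. real (n choose j) * blk_pow K P n i l)"
proof -
  have Pnn: "\<And>i j. 0 \<le> P i j" using st unfolding stochastic_def by auto
  obtain \<theta> where th: "0 \<le> \<theta>" "\<theta> < 1" and b: "\<And>n. blk_pow K P n i l \<le> 2 * \<theta> ^ n"
    using decay[OF st inv] i l by blast
  have s: "summable (\<lambda>n. 2 * (real n ^ j * \<theta> ^ n))"
    by (intro summable_mult summable_poly_geom th)
  show ?thesis
  proof (rule summable_comparison_test'[OF s])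
    fix n :: nat assume "n \<ge> 0"
    have nn: "0 \<le> blk_pow K P n i l" by (rule pow_nonneg[OF Pnn])
    have "real (n choose j) * blk_pow K P n i l \<le> real n ^ j * (2 * \<theta> ^ n)"
      by (intro mult_mono choose_le_pow b nn) auto
    then show "norm (real (n choose j) * blk_pow K P n i l) \<le> 2 * (real n ^ j * \<theta> ^ n)"
      using nn by (simp add: mult_ac)
  qed
qed

definition sig :: "'s set \<Rightarrow> ('s \<Rightarrow> 's \<Rightarrow> real) \<Rightarrow> nat \<Rightarrow> 's \<Rightarrow> 's \<Rightarrow> real" where
  "sig K P j i l = (\<Sum>n. real (n choose j) * blk_pow K P n i l)"

lemma Iminus_sum: "finite K \<Longrightarrow> i \<in> K \<Longrightarrow> (\<Sum>k\<in>K. I_minus P i k * x k) = x i - (\<Sum>k\<in>K. P i k * x k)"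
  unfolding I_minus_def by (simp add: left_diff_distrib sum_subtractf sum_idm_left)

lemma series_choose:
  fixes P :: "'s::finite \<Rightarrow> 's \<Rightarrow> real"
  assumes st: "stochastic P" and inv: "blk_is_inv K (I_minus P) R"
  shows "\<forall>i\<in>K. \<forall>l\<in>K. (\<lambda>n. real (n choose j) * blk_pow K P n i l) sums HH K P R j i l"
proof -
  have fin: "finite K" by simp
  have sm: "\<And>i l j. i \<in> K \<Longrightarrow> l \<in> K \<Longrightarrow> (\<lambda>n. real (n choose j) * blk_pow K P n i l) sums sig K P j i l"
    unfolding sig_def by (rule summable_sums, rule summ_choose[OF st inv])
  have shiftP: "(\<lambda>n. real (n choose j) * blk_pow K P (Suc n) i l) sums (\<Sum>k\<in>K. P i k * sig K P j k l)"
    if "l \<in> K" for i l j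
  proof -
    have "(\<lambda>n. \<Sum>k\<in>K. P i k * (real (n choose j) * blk_pow K P n k l)) sums (\<Sum>k\<in>K. P i k * sig K P j k l)"
      by (intro sums_sum sums_mult sm that)
    moreover have "(\<lambda>n. \<Sum>k\<in>K. P i k * (real (n choose j) * blk_pow K P n k l))
        = (\<lambda>n. real (n choose j) * blk_pow K P (Suc n) i l)"
      by (simp add: blk_mult_def sum_distrib_left mult_ac)
    ultimately show ?thesis by simp
  qed
  have shift: "(\<lambda>n. real (Suc n choose j) * blk_pow K P (Suc n) i l) sums
      (sig K P j i l - real (0 choose j) * idm i l)" if "i \<in> K" "l \<in> K" for i l j
    using sm[OF that, of j] sums_Suc_iff[of "\<lambda>n. real (n choose j) * blk_pow K P n i l"
        "sig K P j i l - real (0 choose j) * idm i l"] by simp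
  show ?thesis
  proof (induction j)
    case 0
    show ?case
    proof (intro ballI)
      fix i l assume i: "i \<in> K" and l: "l \<in> K"
      have "sig K P 0 i l = (\<Sum>k\<in>K. R i k * idm k l)"
      proof (rule inv_unique_vec[OF fin inv _ i])
        fix i assume i: "i \<in> K"
        have "sig K P 0 i l - idm i l = (\<Sum>k\<in>K. P i k * sig K P 0 k l)"
        proof -
          have a: "(\<lambda>n. real (n choose 0) * blk_pow K P (Suc n) i l) sums (sig K P 0 i l - idm i l)"
            using shift[OF i l, where j=0] by simp
          show ?thesis using sums_unique2[OF a shiftP[OF l, where i=i and j=0]] .
        qed
        then show "(\<Sum>k\<in>K. I_minus P i k * sig K P 0 k l) = idm i l"
          by (simp add: Iminus_sum[OF fin i])
      qed
      also have "\<dots> = HH K P R 0 i l" using HH_0[OF fin i l] sum_idm_right[OF fin l] by simp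
      finally show "(\<lambda>n. real (n choose 0) * blk_pow K P n i l) sums HH K P R 0 i l"
        using sm[OF i l, where j=0] by simp
    qed
  next
    case (Suc j)
    show ?case
    proof (intro ballI)
      fix i l assume i: "i \<in> K" and l: "l \<in> K"
      have "sig K P (Suc j) i l = (\<Sum>k\<in>K. R i k * (\<Sum>k'\<in>K. P k k' * sig K P j k' l))"
      proof (rule inv_unique_vec[OF fin inv _ i])
        fix i assume i: "i \<in> K"
        have "(\<lambda>n. real (n choose j) * blk_pow K P (Suc n) i l + real (n choose Suc j) * blk_pow K P (Suc n) i l)
            sums ((\<Sum>k\<in>K. P i k * sig K P j k l) + (\<Sum>k\<in>K. P i k * sig K P (Suc j) k l))"
          by (intro sums_add shiftP l)
        then have "(\<lambda>n. real (Suc n choose Suc j) * blk_pow K P (Suc n) i l)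
            sums ((\<Sum>k\<in>K. P i k * sig K P j k l) + (\<Sum>k\<in>K. P i k * sig K P (Suc j) k l))"
          by (simp add: distrib_right)
        then have "sig K P (Suc j) i l = (\<Sum>k\<in>K. P i k * sig K P j k l) + (\<Sum>k\<in>K. P i k * sig K P (Suc j) k l)"
          using sums_unique2[OF shift[OF i l, where j="Suc j"]] by simp
        then show "(\<Sum>k\<in>K. I_minus P i k * sig K P (Suc j) k l) = (\<Sum>k'\<in>K. P i k' * sig K P j k' l)"
          by (simp add: Iminus_sum[OF fin i])
      qed
      also have "\<dots> = blk_mult K R (blk_mult K P (HH K P R j)) i l"
        unfolding blk_mult_def
        using Suc.IH l sums_unique2[OF sm[where l=l and j=j]]
        by (intro sum.cong refl arg_cong2[where f="(*)"]) auto
      also have "\<dots> = HH K P R (Suc j) i l" by (rule HH_Suc[OF fin inv i l])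
      finally show "(\<lambda>n. real (n choose Suc j) * blk_pow K P n i l) sums HH K P R (Suc j) i l"
        using sm[OF i l, where j="Suc j"] by simp
    qed
  qed
qed

lemma core:
  fixes P :: "'s::finite \<Rightarrow> 's \<Rightarrow> real"
  assumes st: "stochastic P" and inv: "blk_is_inv K (I_minus P) R" and i: "i \<in> K" and l: "l \<in> K"
  shows "(\<lambda>n. (real n + c) ^ m * blk_pow K P n i l) sums (\<Sum>k = 0..m. mgs m k c * HH K P R k i l)"
proof -
  have "(\<lambda>n. \<Sum>k = 0..m. mgs m k c * (real (n choose k) * blk_pow K P n i l)) sums (\<Sum>k = 0..m. mgs m k c * HH K P R k i l)"
    using series_choose[OF st inv] i l by (intro sums_sum sums_mult) auto
  moreover have "(\<lambda>n. \<Sum>k = 0..m. mgs m k c * (real (n choose k) * blk_pow K P n i l))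
      = (\<lambda>n. (real n + c) ^ m * blk_pow K P n i l)"
    by (rule ext) (simp add: newton_mgs sum_distrib_left sum_distrib_right mult_ac)
  ultimately show ?thesis by simp
qed



definition LS :: "'s set \<Rightarrow> nat \<Rightarrow> 's list set" where
  "LS B k = {ys. set ys \<subseteq> B \<and> length ys = k}"

lemma path_prob_Cons: "path_prob P i (y # zs) = P i y * path_prob P y zs"
  unfolding path_prob_def by (simp only: length_Cons prod.lessThan_Suc_shift) simp

lemma path_prob_Nil: "path_prob P i [] = 1"
  unfolding path_prob_def by simp

lemma path_prob_snoc: "path_prob P i (ys @ [j]) = path_prob P i ys * P (last (i # ys)) j"
proof (induction ys arbitrary: i)
  case Nil then show ?case by (simp add: path_prob_def)
next
  case (Cons y ys)
  show ?case using Cons.IH[of y] by (simp add: path_prob_Cons)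
qed

lemma tau_char:
  assumes len: "length xs = n"
  shows "tau_eq A i xs n \<longleftrightarrow> (1 \<le> n \<and> (\<forall>t\<in>{1..<n}. (i # xs) ! t \<notin> A) \<and> (i # xs) ! n \<in> A)"
proof
  assume tau: "tau_eq A i xs n"
  then have n1: "1 \<le> n" and vn: "visits A i xs n = 1"
    and vr: "\<And>r. 1 \<le> r \<Longrightarrow> r < n \<Longrightarrow> visits A i xs r \<noteq> 1"
    unfolding tau_eq_def by auto
  have none: "\<forall>t\<in>{1..<n}. (i # xs) ! t \<notin> A"
  proof (rule ccontr)
    assume "\<not> (\<forall>t\<in>{1..<n}. (i # xs) ! t \<notin> A)"
    then obtain t where t: "1 \<le> t" "t < n" "(i # xs) ! t \<in> A" by auto
    define t0 where "t0 = (LEAST t. 1 \<le> t \<and> (i # xs) ! t \<in> A)"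
    have t0: "1 \<le> t0" "(i # xs) ! t0 \<in> A" "t0 \<le> t"
      using LeastI[of "\<lambda>t. 1 \<le> t \<and> (i # xs) ! t \<in> A" t] Least_le[of "\<lambda>t. 1 \<le> t \<and> (i # xs) ! t \<in> A" t] t
      unfolding t0_def by auto
    have "{s \<in> {1..t0}. (i # xs) ! s \<in> A} = {t0}"
    proof (intro equalityI subsetI)
      fix s assume s: "s \<in> {s \<in> {1..t0}. (i # xs) ! s \<in> A}"
      then have "t0 \<le> s" unfolding t0_def by (auto intro: Least_le)
      then show "s \<in> {t0}" using s by auto
    qed (use t0 in auto)
    then have "visits A i xs t0 = 1" unfolding visits_def by simp
    then show False using vr[of t0] t0 t by auto
  qed
  have sub: "{s \<in> {1..n}. (i # xs) ! s \<in> A} \<subseteq> {n}"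
  proof
    fix s assume s: "s \<in> {s \<in> {1..n}. (i # xs) ! s \<in> A}"
    then have s1: "1 \<le> s" "s \<le> n" "(i # xs) ! s \<in> A" by auto
    have "\<not> s < n"
    proof
      assume "s < n"
      then have "s \<in> {1..<n}" using s1 by simp
      then show False using none s1(3) by blast
    qed
    then show "s \<in> {n}" using s1 by simp
  qed
  have c1: "card {s \<in> {1..n}. (i # xs) ! s \<in> A} = 1" using vn unfolding visits_def .
  have "{s \<in> {1..n}. (i # xs) ! s \<in> A} = {n}"
    using subset_singletonD[OF sub] c1 by (metis card.empty zero_neq_one)
  then have "(i # xs) ! n \<in> A" by auto
  then show "1 \<le> n \<and> (\<forall>t\<in>{1..<n}. (i # xs) ! t \<notin> A) \<and> (i # xs) ! n \<in> A"
    using n1 none by auto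
next
  assume h: "1 \<le> n \<and> (\<forall>t\<in>{1..<n}. (i # xs) ! t \<notin> A) \<and> (i # xs) ! n \<in> A"
  have "{s \<in> {1..n}. (i # xs) ! s \<in> A} = {n}"
  proof (intro equalityI subsetI)
    fix s assume s: "s \<in> {s \<in> {1..n}. (i # xs) ! s \<in> A}"
    then have s1: "1 \<le> s" "s \<le> n" "(i # xs) ! s \<in> A" by auto
    have "\<not> s < n"
    proof
      assume "s < n"
      then have "s \<in> {1..<n}" using s1 by simp
      then show False using h s1(3) by blast
    qed
    then show "s \<in> {n}" using s1 by simp
  next
    fix s assume "s \<in> {n}"
    then show "s \<in> {s \<in> {1..n}. (i # xs) ! s \<in> A}" using h by auto
  qed
  then have "visits A i xs n = 1" unfolding visits_def by simp
  moreover have "visits A i xs r \<noteq> 1" if "1 \<le> r" "r < n" for r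
  proof -
    have e: "{s \<in> {1..r}. (i # xs) ! s \<in> A} = {}" using h that by auto
    show ?thesis unfolding visits_def e by simp
  qed
  ultimately show "tau_eq A i xs n" unfolding tau_eq_def using h by auto
qed

lemma nth_snoc_shift: "1 \<le> t \<Longrightarrow> t \<le> length ys \<Longrightarrow> (i # ys @ [j]) ! t = ys ! (t - 1)"
  by (cases t) (auto simp: nth_append)

lemma finite_len: "finite {xs :: 's::finite list. length xs = n}"
proof -
  have "{xs :: 's list. length xs = n} = {xs. set xs \<subseteq> UNIV \<and> length xs = n}" by auto
  then show ?thesis using finite_lists_length_eq[of "UNIV :: 's set" n] by simp
qed

lemma first_prob_0: "first_prob P A i j 0 = 0"
  unfolding first_prob_def tau_eq_def by simp

lemma L1:
  fixes P :: "'s::finite \<Rightarrow> 's \<Rightarrow> real"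
  assumes j: "j \<in> A"
  shows "first_prob P A i j (Suc k) = (\<Sum>ys\<in>LS (- A) k. path_prob P i ys * P (last (i # ys)) j)"
proof -
  let ?C = "\<lambda>xs. tau_eq A i xs (Suc k) \<and> (i # xs) ! Suc k = j"
  have "first_prob P A i j (Suc k) = (\<Sum>xs\<in>{xs \<in> {xs. length xs = Suc k}. ?C xs}. path_prob P i xs)"
    unfolding first_prob_def by (rule sum.inter_filter[symmetric]) (rule finite_len)
  also have "{xs \<in> {xs. length xs = Suc k}. ?C xs} = (\<lambda>ys. ys @ [j]) ` LS (- A) k"
  proof (intro equalityI subsetI)
    fix xs assume "xs \<in> {xs \<in> {xs. length xs = Suc k}. ?C xs}"
    then have len: "length xs = Suc k" and tc: "tau_eq A i xs (Suc k)" and xj: "(i # xs) ! Suc k = j" by auto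
    from tc have nA: "\<forall>t\<in>{1..<Suc k}. (i # xs) ! t \<notin> A" using tau_char[OF len] by blast
    have ne: "xs \<noteq> []" using len by auto
    have lx: "last xs = j" using xj len ne by (simp add: last_conv_nth)
    have "set (butlast xs) \<subseteq> - A"
    proof
      fix y assume "y \<in> set (butlast xs)"
      then obtain t where t: "t < length (butlast xs)" "butlast xs ! t = y" by (auto simp: in_set_conv_nth)
      then have "y = (i # xs) ! Suc t" using len by (simp add: nth_butlast)
      moreover have "Suc t \<in> {1..<Suc k}" using t len by simp
      ultimately show "y \<in> - A" using nA by blast
    qed
    moreover have "length (butlast xs) = k" using len by simp
    moreover have "xs = butlast xs @ [j]" using ne lx by (metis append_butlast_last_id)
    ultimately show "xs \<in> (\<lambda>ys. ys @ [j]) ` LS (- A) k" unfolding LS_def by blast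
  next
    fix xs assume "xs \<in> (\<lambda>ys. ys @ [j]) ` LS (- A) k"
    then obtain ys where ys: "set ys \<subseteq> - A" "length ys = k" and xs: "xs = ys @ [j]"
      unfolding LS_def by auto
    have len: "length xs = Suc k" using xs ys by simp
    have "\<forall>t\<in>{1..<Suc k}. (i # xs) ! t \<notin> A"
    proof
      fix t assume t: "t \<in> {1..<Suc k}"
      then have "(i # xs) ! t = ys ! (t - 1)" unfolding xs using ys by (intro nth_snoc_shift) auto
      moreover have "ys ! (t - 1) \<in> set ys" using t ys by auto
      ultimately show "(i # xs) ! t \<notin> A" using ys by auto
    qed
    moreover have "(i # xs) ! Suc k = j" using xs ys by (simp add: nth_append)
    ultimately show "xs \<in> {xs \<in> {xs. length xs = Suc k}. ?C xs}"
      using tau_char[OF len] len j by auto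
  qed
  also have "(\<Sum>xs\<in>(\<lambda>ys. ys @ [j]) ` LS (- A) k. path_prob P i xs)
      = (\<Sum>ys\<in>LS (- A) k. path_prob P i (ys @ [j]))"
    by (rule sum.reindex_cong[where l="\<lambda>ys. ys @ [j]"]) (auto simp: inj_on_def)
  also have "\<dots> = (\<Sum>ys\<in>LS (- A) k. path_prob P i ys * P (last (i # ys)) j)"
    by (simp add: path_prob_snoc)
  finally show ?thesis .
qed

lemma L3:
  fixes P :: "'s::finite \<Rightarrow> 's \<Rightarrow> real"
  shows "(\<Sum>ys\<in>LS B (Suc k). path_prob P i ys * g (last (i # ys)))
     = (\<Sum>y\<in>B. P i y * (\<Sum>zs\<in>LS B k. path_prob P y zs * g (last (y # zs))))"
proof -
  have "(\<Sum>ys\<in>LS B (Suc k). path_prob P i ys * g (last (i # ys)))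
      = (\<Sum>p\<in>LS B k \<times> B. path_prob P i (snd p # fst p) * g (last (i # snd p # fst p)))"
    unfolding LS_def lists_length_Suc_eq
    by (rule sum.reindex_cong[where l="\<lambda>(xs, n). n # xs"]) (auto simp: inj_on_def)
  also have "\<dots> = (\<Sum>zs\<in>LS B k. \<Sum>y\<in>B. path_prob P i (y # zs) * g (last (i # y # zs)))"
    unfolding sum.cartesian_product by (simp add: split_def)
  also have "\<dots> = (\<Sum>zs\<in>LS B k. \<Sum>y\<in>B. P i y * (path_prob P y zs * g (last (y # zs))))"
    by (simp add: path_prob_Cons mult_ac)
  also have "\<dots> = (\<Sum>y\<in>B. \<Sum>zs\<in>LS B k. P i y * (path_prob P y zs * g (last (y # zs))))"
    by (rule sum.swap)
  also have "\<dots> = (\<Sum>y\<in>B. P i y * (\<Sum>zs\<in>LS B k. path_prob P y zs * g (last (y # zs))))"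
    by (simp add: sum_distrib_left)
  finally show ?thesis .
qed

lemma L2:
  fixes P :: "'s::finite \<Rightarrow> 's \<Rightarrow> real"
  assumes "i \<in> B"
  shows "(\<Sum>ys\<in>LS B k. path_prob P i ys * g (last (i # ys))) = (\<Sum>l\<in>B. blk_pow B P k i l * g l)"
  using assms
proof (induction k arbitrary: i)
  case 0
  have "LS B 0 = {[]}" unfolding LS_def by auto
  then show ?case using sum_idm_left[of B i g] 0 by (simp add: path_prob_Nil)
next
  case (Suc k)
  have "(\<Sum>ys\<in>LS B (Suc k). path_prob P i ys * g (last (i # ys)))
      = (\<Sum>y\<in>B. P i y * (\<Sum>l\<in>B. blk_pow B P k y l * g l))"
    unfolding L3 by (rule sum.cong[OF refl]) (simp only: Suc.IH)
  also have "\<dots> = (\<Sum>l\<in>B. blk_pow B P (Suc k) i l * g l)"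
    by (simp add: blk_mult_def sum_distrib_left sum_distrib_right mult_ac, rule sum.swap)
  finally show ?case .
qed



theorem mainTheorem1:
  fixes P :: "'s::finite \<Rightarrow> 's \<Rightarrow> real" and M :: "'s set" and m :: nat
  assumes "stochastic P"
    and "M \<noteq> {}" and "- M \<noteq> {}"
    and "blk_invertible M (I_minus P)"
    and "blk_invertible (- M) (I_minus P)"
  shows "(\<forall>i\<in>M. \<forall>j\<in>- M.
           (\<lambda>n. real n ^ m * first_prob P (- M) i j n) sums
           (\<Sum>k = 0..m. mgs m k 1 *
              blk_mult M (blk_mult M (blk_pow M P k) (blk_pow M (blk_inv M (I_minus P)) (k + 1))) P i j))
       \<and> (\<forall>i\<in>M. \<forall>j\<in>M.
           (\<lambda>n. real n ^ m * first_prob P M i j n) sums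
           (P i j + (\<Sum>l\<in>- M. P i l *
              (\<Sum>k = 0..m. mgs m k 2 *
                 blk_mult (- M) (blk_mult (- M) (blk_pow (- M) P k)
                    (blk_pow (- M) (blk_inv (- M) (I_minus P)) (k + 1))) P l j))))"
proof
  note st = assms(1)
  define R where "R = blk_inv M (I_minus P)"
  define R' where "R' = blk_inv (- M) (I_minus P)"
  have inv: "blk_is_inv M (I_minus P) R"
    using assms(4) unfolding blk_invertible_def blk_inv_def R_def by (rule someI_ex)
  have inv': "blk_is_inv (- M) (I_minus P) R'"
    using assms(5) unfolding blk_invertible_def blk_inv_def R'_def by (rule someI_ex)
  show "\<forall>i\<in>M. \<forall>j\<in>- M.
           (\<lambda>n. real n ^ m * first_prob P (- M) i j n) sums
           (\<Sum>k = 0..m. mgs m k 1 *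
              blk_mult M (blk_mult M (blk_pow M P k) (blk_pow M (blk_inv M (I_minus P)) (k + 1))) P i j)"
  proof (intro ballI)
    fix i j assume i: "i \<in> M" and j: "j \<in> - M"
    have fpS: "first_prob P (- M) i j (Suc k) = (\<Sum>l\<in>M. blk_pow M P k i l * P l j)" for k
      using L1[OF j, where P=P and i=i and k=k] L2[OF i, where P=P and k=k and g="\<lambda>l. P l j"] by simp
    let ?S = "\<lambda>l. \<Sum>k = 0..m. mgs m k 1 * HH M P R k i l"
    have "(\<lambda>n. \<Sum>l\<in>M. ((real n + 1) ^ m * blk_pow M P n i l) * P l j) sums (\<Sum>l\<in>M. ?S l * P l j)"
      by (intro sums_sum sums_mult2 core[OF st inv i]) 
    moreover have "(\<lambda>n. \<Sum>l\<in>M. ((real n + 1) ^ m * blk_pow M P n i l) * P l j)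
       = (\<lambda>n. real (Suc n) ^ m * first_prob P (- M) i j (Suc n))"
      by (rule ext) (simp add: fpS sum_distrib_left mult_ac add.commute)
    ultimately have "(\<lambda>n. real (Suc n) ^ m * first_prob P (- M) i j (Suc n)) sums (\<Sum>l\<in>M. ?S l * P l j)"
      by simp
    then have "(\<lambda>n. real n ^ m * first_prob P (- M) i j n) sums (\<Sum>l\<in>M. ?S l * P l j)"
      using sums_Suc_iff[of "\<lambda>n. real n ^ m * first_prob P (- M) i j n"] by (simp add: first_prob_0)
    moreover have "(\<Sum>l\<in>M. ?S l * P l j) = (\<Sum>k = 0..m. mgs m k 1 *
              blk_mult M (blk_mult M (blk_pow M P k) (blk_pow M R (k + 1))) P i j)"
      unfolding HH_def blk_mult_def[of M _ P]
      by (simp add: sum_distrib_left sum_distrib_right mult_ac, rule sum.swap)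
    ultimately show "(\<lambda>n. real n ^ m * first_prob P (- M) i j n) sums
           (\<Sum>k = 0..m. mgs m k 1 *
              blk_mult M (blk_mult M (blk_pow M P k) (blk_pow M (blk_inv M (I_minus P)) (k + 1))) P i j)"
      unfolding R_def by simp
  qed
  show "\<forall>i\<in>M. \<forall>j\<in>M.
           (\<lambda>n. real n ^ m * first_prob P M i j n) sums
           (P i j + (\<Sum>l\<in>- M. P i l *
              (\<Sum>k = 0..m. mgs m k 2 *
                 blk_mult (- M) (blk_mult (- M) (blk_pow (- M) P k)
                    (blk_pow (- M) (blk_inv (- M) (I_minus P)) (k + 1))) P l j)))"
  proof (intro ballI)
    fix i j assume i: "i \<in> M" and j: "j \<in> M"
    have LS0: "LS B 0 = {[]}" for B :: "'s set" unfolding LS_def by auto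
    have fp1: "first_prob P M i j (Suc 0) = P i j"
      using L1[OF j, where P=P and i=i and k=0] by (simp add: LS0 path_prob_Nil)
    have fpSS: "first_prob P M i j (Suc (Suc k)) = (\<Sum>y\<in>- M. P i y * (\<Sum>l\<in>- M. blk_pow (- M) P k y l * P l j))" for k
    proof -
      have "first_prob P M i j (Suc (Suc k)) = (\<Sum>ys\<in>LS (- M) (Suc k). path_prob P i ys * P (last (i # ys)) j)"
        by (rule L1[OF j])
      also have "\<dots> = (\<Sum>y\<in>- M. P i y * (\<Sum>zs\<in>LS (- M) k. path_prob P y zs * P (last (y # zs)) j))"
        by (rule L3)
      also have "\<dots> = (\<Sum>y\<in>- M. P i y * (\<Sum>l\<in>- M. blk_pow (- M) P k y l * P l j))"
      proof (rule sum.cong[OF refl])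
        fix y assume y: "y \<in> - M"
        show "P i y * (\<Sum>zs\<in>LS (- M) k. path_prob P y zs * P (last (y # zs)) j)
            = P i y * (\<Sum>l\<in>- M. blk_pow (- M) P k y l * P l j)"
          using L2[OF y, where P=P and k=k and g="\<lambda>l. P l j"] by simp
      qed
      finally show ?thesis .
    qed
    let ?S = "\<lambda>y l. \<Sum>k = 0..m. mgs m k 2 * HH (- M) P R' k y l"
    define f where "f n = real n ^ m * first_prob P M i j n" for n
    have "(\<lambda>n. \<Sum>y\<in>- M. P i y * (\<Sum>l\<in>- M. ((real n + 2) ^ m * blk_pow (- M) P n y l) * P l j))
        sums (\<Sum>y\<in>- M. P i y * (\<Sum>l\<in>- M. ?S y l * P l j))"
      by (intro sums_sum sums_mult sums_mult2 core[OF st inv'])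
    moreover have "(\<lambda>n. \<Sum>y\<in>- M. P i y * (\<Sum>l\<in>- M. ((real n + 2) ^ m * blk_pow (- M) P n y l) * P l j))
       = (\<lambda>n. f (Suc (Suc n)))"
      by (rule ext) (simp add: f_def fpSS sum_distrib_left mult_ac add.commute)
    ultimately have "(\<lambda>n. f (Suc (Suc n))) sums (\<Sum>y\<in>- M. P i y * (\<Sum>l\<in>- M. ?S y l * P l j))"
      by simp
    then have "(\<lambda>n. f (Suc n)) sums ((\<Sum>y\<in>- M. P i y * (\<Sum>l\<in>- M. ?S y l * P l j)) + f (Suc 0))"
      using sums_Suc_iff[of "\<lambda>n. f (Suc n)"] by simp
    then have "f sums ((\<Sum>y\<in>- M. P i y * (\<Sum>l\<in>- M. ?S y l * P l j)) + f (Suc 0) + f 0)"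
      using sums_Suc_iff[of f] by simp
    then have "f sums (P i j + (\<Sum>y\<in>- M. P i y * (\<Sum>l\<in>- M. ?S y l * P l j)))"
      by (simp add: f_def fp1 first_prob_0 add.commute)
    moreover have "(\<Sum>y\<in>- M. P i y * (\<Sum>l\<in>- M. ?S y l * P l j))
        = (\<Sum>l\<in>- M. P i l * (\<Sum>k = 0..m. mgs m k 2 *
                 blk_mult (- M) (blk_mult (- M) (blk_pow (- M) P k) (blk_pow (- M) R' (k + 1))) P l j))"
    proof (rule sum.cong[OF refl])
      fix y
      have "(\<Sum>l\<in>- M. ?S y l * P l j) = (\<Sum>k = 0..m. mgs m k 2 *
                 blk_mult (- M) (blk_mult (- M) (blk_pow (- M) P k) (blk_pow (- M) R' (k + 1))) P y j)"
        unfolding HH_def blk_mult_def[of "- M" _ P]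
        by (simp add: sum_distrib_left sum_distrib_right mult_ac, rule sum.swap)
      then show "P i y * (\<Sum>l\<in>- M. ?S y l * P l j) = P i y * (\<Sum>k = 0..m. mgs m k 2 *
                 blk_mult (- M) (blk_mult (- M) (blk_pow (- M) P k) (blk_pow (- M) R' (k + 1))) P y j)"
        by simp
    qed
    ultimately show "(\<lambda>n. real n ^ m * first_prob P M i j n) sums
           (P i j + (\<Sum>l\<in>- M. P i l *
              (\<Sum>k = 0..m. mgs m k 2 *
                 blk_mult (- M) (blk_mult (- M) (blk_pow (- M) P k)
                    (blk_pow (- M) (blk_inv (- M) (I_minus P)) (k + 1))) P l j)))"
      unfolding R'_def f_def by simp
  qed
qed

end
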